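(* Let $C$ be a compact Lie group, let $W$ be a finite-dimensional real $C$-module and let $w\in W$ be such that the orbit $Cw$ spans $W$. Then $L:=\{g\in\operatorname{GL}(W)\mid gCw=Cw\}$ is compact. *)

theory Defs
  imports "HOL-Analysis.Analysis" "HOL-Algebra.Group"
begin

text \<open>A topological group: an (abstract) group whose carrier is the underlying set
of a Hausdorff topology, with continuous multiplication and inversion.\<close>
definition topological_group :: "('c, 'm) monoid_scheme \<Rightarrow> 'c topology \<Rightarrow> bool" where
  "topological_group G T \<longleftrightarrow> group G \<and> topspace T = carrier G \<and> Hausdorff_space T \<and>
     continuous_map (prod_topology T T) T (\<lambda>(g, h). g \<otimes>\<^bsub>G\<^esub> h) \<and>
     continuous_map T T (\<lambda>g. inv\<^bsub>G\<^esub> g)"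

text \<open>A continuous finite-dimensional real representation of G on W = real^'n,
given by matrices.\<close>
definition continuous_rep ::
  "('c, 'm) monoid_scheme \<Rightarrow> 'c topology \<Rightarrow> ('c \<Rightarrow> real^'n^'n) \<Rightarrow> bool" where
  "continuous_rep G T \<rho> \<longleftrightarrow>
     continuous_map T euclidean \<rho> \<and>
     \<rho> \<one>\<^bsub>G\<^esub> = mat 1 \<and>
     (\<forall>g\<in>carrier G. \<forall>h\<in>carrier G. \<rho> (g \<otimes>\<^bsub>G\<^esub> h) = \<rho> g ** \<rho> h)"

definition orbit_rep :: "('c, 'm) monoid_scheme \<Rightarrow> ('c \<Rightarrow> real^'n^'n) \<Rightarrow> real^'n \<Rightarrow> (real^'n) set" where
  "orbit_rep G \<rho> w = (\<lambda>g. \<rho> g *v w) ` carrier G"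

end

theory Submission
  imports Defs
begin

lemma axis_comp: "(A *v axis j (1::real))$i = A$i$j"
  by (simp add: matrix_vector_mult_def axis_def if_distrib cong: if_cong)

lemma span_bound:
  fixes Ob :: "(real^'n) set"
  assumes "bounded Ob" "y \<in> span Ob"
  shows "\<exists>K. \<forall>A::real^'n^'n. (\<lambda>x. A *v x) ` Ob \<subseteq> Ob \<longrightarrow> norm (A *v y) \<le> K"
proof -
  obtain t r where t: "finite t" "t \<subseteq> Ob" and y: "y = (\<Sum>a\<in>t. r a *\<^sub>R a)"
    using assms(2) unfolding span_explicit by blast
  obtain M where M: "\<And>v. v \<in> Ob \<Longrightarrow> norm v \<le> M"
    using assms(1) unfolding bounded_iff by blast
  show ?thesis
  proof (intro exI allI impI)
    fix A :: "real^'n^'n"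
    assume AO: "(\<lambda>x. A *v x) ` Ob \<subseteq> Ob"
    have "A *v y = (\<Sum>a\<in>t. r a *\<^sub>R (A *v a))"
      unfolding y using linear_sum[OF matrix_vector_mul_linear, of A]
      by (simp add: linear_sum[OF matrix_vector_mul_linear] matrix_vector_mult_scaleR)
    also have "norm \<dots> \<le> (\<Sum>a\<in>t. norm (r a *\<^sub>R (A *v a)))" by (rule norm_sum)
    also have "\<dots> \<le> (\<Sum>a\<in>t. \<bar>r a\<bar> * M)"
    proof (rule sum_mono)
      fix a assume "a \<in> t"
      then have "A *v a \<in> Ob" using t AO by blast
      then show "norm (r a *\<^sub>R (A *v a)) \<le> \<bar>r a\<bar> * M"
        using M by (simp add: mult_left_mono)
    qed
    finally show "norm (A *v y) \<le> (\<Sum>a\<in>t. \<bar>r a\<bar> * M)" .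
  qed
qed

lemma stab_bounded:
  fixes Ob :: "(real^'n) set"
  assumes "bounded Ob" "span Ob = UNIV"
  shows "bounded {A::real^'n^'n. (\<lambda>x. A *v x) ` Ob \<subseteq> Ob}"
proof -
  have "\<forall>j. \<exists>K. \<forall>A::real^'n^'n. (\<lambda>x. A *v x) ` Ob \<subseteq> Ob \<longrightarrow> norm (A *v axis j 1) \<le> K"
    using span_bound[OF assms(1)] assms(2) by blast
  then obtain K where K: "\<And>j A. (\<lambda>x. (A::real^'n^'n) *v x) ` Ob \<subseteq> Ob \<Longrightarrow> norm (A *v axis j 1) \<le> K j"
    by metis
  show ?thesis unfolding bounded_iff
  proof (intro exI ballI)
    fix A :: "real^'n^'n" assume "A \<in> {A. (\<lambda>x. A *v x) ` Ob \<subseteq> Ob}"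
    then have AO: "(\<lambda>x. A *v x) ` Ob \<subseteq> Ob" by simp
    have "norm A \<le> (\<Sum>i\<in>UNIV. norm (A$i))"
      by (simp add: norm_vec_def L2_set_le_sum)
    also have "\<dots> \<le> (\<Sum>i::'n\<in>UNIV. \<Sum>j\<in>UNIV. K j)"
    proof (rule sum_mono)
      fix i
      have "norm (A$i) \<le> (\<Sum>j\<in>UNIV. \<bar>A$i$j\<bar>)" by (rule norm_le_l1_cart)
      also have "\<dots> \<le> (\<Sum>j\<in>UNIV. K j)"
      proof (rule sum_mono)
        fix j
        have "\<bar>A$i$j\<bar> \<le> norm (A *v axis j 1)"
          using component_le_norm_cart[of "A *v axis j 1" i] by (simp add: axis_comp)
        then show "\<bar>A$i$j\<bar> \<le> K j" using K[OF AO, of j] by linarith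
      qed
      finally show "norm (A$i) \<le> (\<Sum>j\<in>UNIV. K j)" .
    qed
    finally show "norm A \<le> (\<Sum>i::'n\<in>UNIV. \<Sum>j\<in>UNIV. K j)" .
  qed
qed

lemma stab_closed:
  fixes Ob :: "(real^'n) set"
  assumes "closed Ob"
  shows "closed {A::real^'n^'n. (\<lambda>x. A *v x) ` Ob \<subseteq> Ob}"
proof -
  have eq: "{A::real^'n^'n. (\<lambda>x. A *v x) ` Ob \<subseteq> Ob} = (\<Inter>x\<in>Ob. {A. A *v x \<in> Ob})" by auto
  have "closed {A::real^'n^'n. A *v x \<in> Ob}" for x
  proof -
    have "continuous_on UNIV (\<lambda>A::real^'n^'n. A *v x)"
      unfolding matrix_vector_mult_def by (intro continuous_intros)
    then show ?thesis using continuous_closed_preimage[OF _ closed_UNIV assms] by (simp add: vimage_def)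
  qed
  then show ?thesis unfolding eq by blast
qed

theorem proposition2p2:
  fixes G :: "('c, 'm) monoid_scheme" and T :: "'c topology"
    and \<rho> :: "'c \<Rightarrow> real^'n^'n" and w :: "real^'n"
  assumes "topological_group G T"
    and "compact_space T"
    and "continuous_rep G T \<rho>"
    and "span (orbit_rep G \<rho> w) = UNIV"
  shows "compact {A :: real^'n^'n. invertible A \<and> (\<lambda>x. A *v x) ` orbit_rep G \<rho> w = orbit_rep G \<rho> w}"
proof -
  define Ob where "Ob = orbit_rep G \<rho> w"
  have top: "topspace T = carrier G" using assms(1) by (simp add: topological_group_def)
  have "compactin euclidean (\<rho> ` topspace T)"
    using image_compactin[of T "topspace T" euclidean \<rho>] assms(2,3)
    by (simp add: compact_space_def continuous_rep_def)
  then have c1: "compact (\<rho> ` topspace T)" by simp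
  have "Ob = (\<lambda>A. A *v w) ` (\<rho> ` topspace T)"
    unfolding Ob_def orbit_rep_def top by auto
  moreover have "continuous_on UNIV (\<lambda>A::real^'n^'n. A *v w)"
    unfolding matrix_vector_mult_def by (intro continuous_intros)
  ultimately have cO: "compact Ob"
    using compact_continuous_image c1 continuous_on_subset by (metis subset_UNIV)
  define S where "S = {A::real^'n^'n. (\<lambda>x. A *v x) ` Ob \<subseteq> Ob}"
  have bS: "bounded S" unfolding S_def
    by (rule stab_bounded) (use cO assms(4) Ob_def compact_imp_bounded in auto)
  have cS: "closed S" unfolding S_def
    by (rule stab_closed) (use cO compact_imp_closed in auto)
  define K where "K = (S \<times> S) \<inter> {p. fst p ** snd p = mat 1}"
  have "continuous_on UNIV (\<lambda>p::(real^'n^'n) \<times> (real^'n^'n). fst p ** snd p)"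
    unfolding matrix_matrix_mult_def by (intro continuous_intros)
  then have "closed {p::(real^'n^'n) \<times> (real^'n^'n). fst p ** snd p = mat 1}"
    using continuous_closed_preimage[OF _ closed_UNIV, of "\<lambda>p::(real^'n^'n) \<times> (real^'n^'n). fst p ** snd p" "{mat 1}"]
    by (simp add: vimage_def)
  then have "closed K" unfolding K_def using cS by (intro closed_Int closed_Times) auto
  moreover have "bounded K" unfolding K_def using bS
    using bounded_Times[OF bS bS] bounded_subset[OF _ Int_lower1] by blast
  ultimately have cK: "compact K" by (simp add: compact_eq_bounded_closed)
  have "continuous_on K fst" by (intro continuous_intros)
  then have cfK: "compact (fst ` K)" using cK compact_continuous_image by blast
  have "{A :: real^'n^'n. invertible A \<and> (\<lambda>x. A *v x) ` Ob = Ob} = fst ` K"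
  proof (intro equalityI subsetI)
    fix A :: "real^'n^'n" assume "A \<in> {A. invertible A \<and> (\<lambda>x. A *v x) ` Ob = Ob}"
    then have inv: "invertible A" and AO: "(\<lambda>x. A *v x) ` Ob = Ob" by auto
    obtain B where AB: "A ** B = mat 1" and BA: "B ** A = mat 1"
      using inv unfolding invertible_def by blast
    have "(\<lambda>x. B *v x) ` Ob \<subseteq> Ob"
    proof
      fix v assume "v \<in> (\<lambda>x. B *v x) ` Ob"
      then obtain u where u: "u \<in> Ob" "v = B *v u" by auto
      then obtain z where z: "z \<in> Ob" "u = A *v z" using AO by blast
      have "v = z" using u z BA by (simp add: matrix_vector_mul_assoc)
      then show "v \<in> Ob" using z by simp
    qed
    then have "(A, B) \<in> K" unfolding K_def S_def using AO AB by auto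
    then show "A \<in> fst ` K" by force
  next
    fix A :: "real^'n^'n" assume "A \<in> fst ` K"
    then obtain B where "(A, B) \<in> K" by force
    then have AO: "(\<lambda>x. A *v x) ` Ob \<subseteq> Ob" and BO: "(\<lambda>x. B *v x) ` Ob \<subseteq> Ob"
      and AB: "A ** B = mat 1" unfolding K_def S_def by auto
    have BA: "B ** A = mat 1" using AB matrix_left_right_inverse by blast
    have inv: "invertible A" unfolding invertible_def using AB BA by blast
    have "Ob \<subseteq> (\<lambda>x. A *v x) ` Ob"
    proof
      fix v assume v: "v \<in> Ob"
      have "v = A *v (B *v v)" using AB by (simp add: matrix_vector_mul_assoc)
      moreover have "B *v v \<in> Ob" using BO v by blast
      ultimately show "v \<in> (\<lambda>x. A *v x) ` Ob" by blast
    qed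
    then show "A \<in> {A. invertible A \<and> (\<lambda>x. A *v x) ` Ob = Ob}" using AO inv by auto
  qed
  then show ?thesis using cfK unfolding Ob_def by simp
qed

end
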